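(* Let $n\ge1$, $p\in\{0,\dots,n\}$, $\mathcal{X}=\{x\in\{0,1\}^n:\sum_{i=1}^n x_i=p\}$, $\hat c\in\mathbb{R}^n_{\ge0}$, and for $\lambda\in[0,1]$ let $\mathcal{U}(\lambda)=\prod_{i=1}^n[(1-\lambda)\hat c_i,(1+\lambda)\hat c_i]$. For $x\in\mathcal{X}$ define \[ reg(x,\lambda)=\max_{c\in\mathcal{U}(\lambda)}\Big(c^tx-\min_{y\in\mathcal{X}}c^ty\Big),\qquad \lambda\in[0,1], \] and let $\overline{\Lambda}(x)\subseteq[0,1]$ be the set of changepoints (breakpoints) of the piecewise linear function $reg(x,\cdot)$. Then $|\overline{\Lambda}(x)|\in\mathcal{O}(\min\{p,n-p\})$ for every fixed $x\in\mathcal{X}$, and there is a set $\overline{\Lambda}\subseteq[0,1]$ with $|\overline{\Lambda}|\in\mathcal{O}(n^2)$ such that $\overline{\Lambda}(x)\subseteq\overline{\Lambda}$ for all $x\in\mathcal{X}$.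
   Context: For fixed $x$, $reg(x,\lambda)=\max_{y\in\mathcal{X}}\big((1+\lambda)\hat c^tx-\sum_i \hat c_i(1-\lambda+2\lambda x_i)y_i\big)$ is a maximum of finitely many affine functions of $\lambda$, hence piecewise linear; its changepoints are the values of $\lambda$ where the slope changes. *)

theory Defs
  imports Complex_Main
begin

text \<open>Vectors in R^n are functions nat => real; only indices i < n matter.
  Feasible set X = {x in {0,1}^n : sum x_i = p}; entries beyond n are fixed to 0.\<close>
definition feas :: "nat \<Rightarrow> nat \<Rightarrow> (nat \<Rightarrow> real) set" where
  "feas n p = {x. (\<forall>i<n. x i \<in> {0, 1}) \<and> (\<forall>i\<ge>n. x i = 0) \<and> (\<Sum>i<n. x i) = real p}"

definition unc :: "nat \<Rightarrow> (nat \<Rightarrow> real) \<Rightarrow> real \<Rightarrow> (nat \<Rightarrow> real) set" where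
  "unc n ch lam = {c. (\<forall>i<n. (1 - lam) * ch i \<le> c i \<and> c i \<le> (1 + lam) * ch i) \<and> (\<forall>i\<ge>n. c i = 0)}"

definition ip :: "nat \<Rightarrow> (nat \<Rightarrow> real) \<Rightarrow> (nat \<Rightarrow> real) \<Rightarrow> real" where
  "ip n c x = (\<Sum>i<n. c i * x i)"

text \<open>reg(x, lambda) = max over c in U(lambda) of (c^t x - min over y in X of c^t y).
  The maximum is attained (compact set, continuous function), so it equals the supremum.\<close>
definition reg :: "nat \<Rightarrow> nat \<Rightarrow> (nat \<Rightarrow> real) \<Rightarrow> (nat \<Rightarrow> real) \<Rightarrow> real \<Rightarrow> real" where
  "reg n p ch x lam = (SUP c \<in> unc n ch lam. ip n c x - Min ((\<lambda>y. ip n c y) ` feas n p))"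

definition changepoints :: "(real \<Rightarrow> real) \<Rightarrow> real set" where
  "changepoints f = {t \<in> {0<..<1}. \<not> (\<exists>e>0. \<exists>a b. \<forall>s\<in>{t - e<..<t + e}. f s = a * s + b)}"

end

theory Submission
  imports Defs
begin



definition mx :: "'a set \<Rightarrow> ('a \<Rightarrow> real) \<Rightarrow> ('a \<Rightarrow> real) \<Rightarrow> real \<Rightarrow> real" where
  "mx I a b t = Max ((\<lambda>k. a k + b k * t) ` I)"

lemma mx_ge: "finite I \<Longrightarrow> k \<in> I \<Longrightarrow> a k + b k * t \<le> mx I a b t"
  unfolding mx_def by (rule Max_ge) auto

lemma mx_in: "finite I \<Longrightarrow> I \<noteq> {} \<Longrightarrow> \<exists>k\<in>I. a k + b k * t = mx I a b t"
proof -
  assume "finite I" "I \<noteq> {}"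
  then have "mx I a b t \<in> (\<lambda>k. a k + b k * t) ` I" unfolding mx_def by (intro Max_in) auto
  then show ?thesis by auto
qed

lemma G1:
  assumes fin: "finite I" and ne: "I \<noteq> {}"
    and nochg: "\<forall>k\<in>I. \<forall>l\<in>I. a k + b k*t = mx I a b t \<longrightarrow> a l + b l*t = mx I a b t \<longrightarrow> b k = b l"
  shows "t \<notin> changepoints (mx I a b)"
proof -
  define M where "M = mx I a b t"
  obtain k0 where k0: "k0 \<in> I" "a k0 + b k0 * t = M" using mx_in[OF fin ne] M_def by metis
  define N where "N = {k\<in>I. a k + b k * t < M}"
  have finN: "finite N" using fin N_def by auto
  have "\<forall>k\<in>N. eventually (\<lambda>s. 0 < (a k0 + b k0 * s) - (a k + b k * s)) (nhds t)"
  proof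
    fix k assume kN: "k \<in> N"
    have tl: "((\<lambda>s. (a k0 + b k0 * s) - (a k + b k * s)) \<longlongrightarrow> (a k0 + b k0 * t) - (a k + b k * t)) (nhds t)"
      by (intro tendsto_intros filterlim_ident)
    have "0 < (a k0 + b k0 * t) - (a k + b k * t)" using kN k0 N_def by auto
    from order_tendstoD(1)[OF tl this] show "eventually (\<lambda>s. 0 < (a k0 + b k0 * s) - (a k + b k * s)) (nhds t)" .
  qed
  from eventually_ball_finite[OF finN this]
  obtain e where e: "e > 0" "\<forall>s. dist s t < e \<longrightarrow> (\<forall>k\<in>N. 0 < (a k0 + b k0 * s) - (a k + b k * s))"
    unfolding eventually_nhds_metric by blast
  have "\<forall>s\<in>{t - e<..<t + e}. mx I a b s = b k0 * s + a k0"
  proof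
    fix s assume s: "s \<in> {t - e<..<t + e}"
    then have ds: "dist s t < e" by (auto simp: dist_real_def)
    show "mx I a b s = b k0 * s + a k0"
      unfolding mx_def
    proof (rule Max_eqI)
      show "finite ((\<lambda>k. a k + b k * s) ` I)" using fin by auto
      show "b k0 * s + a k0 \<in> (\<lambda>k. a k + b k * s) ` I" using k0 by (auto intro!: image_eqI[of _ _ k0])
      fix y assume "y \<in> (\<lambda>k. a k + b k * s) ` I"
      then obtain k where k: "k \<in> I" "y = a k + b k * s" by auto
      have le: "a k + b k * t \<le> M" using mx_ge[OF fin k(1)] M_def by auto
      show "y \<le> b k0 * s + a k0"
      proof (cases "a k + b k * t = M")
        case True
        then have "b k = b k0" using nochg k0 k M_def by metis
        moreover then have "a k = a k0" using True k0 by auto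
        ultimately show ?thesis using k by simp
      next
        case False
        then have "k \<in> N" using le k N_def by auto
        then show ?thesis using e ds k by force
      qed
    qed
  qed
  then show ?thesis unfolding changepoints_def using e(1) by blast
qed

definition act where "act I a b t = {k\<in>I. a k + b k * t = mx I a b t}"

lemma act_mono:
  assumes fin: "finite I" and t: "t1 < t2" and k1: "k1 \<in> act I a b t1" and k2: "k2 \<in> act I a b t2"
  shows "b k1 \<le> b k2"
proof -
  have a1: "k1 \<in> I" "a k1 + b k1 * t1 = mx I a b t1" using k1 by (auto simp: act_def)
  have a2: "k2 \<in> I" "a k2 + b k2 * t2 = mx I a b t2" using k2 by (auto simp: act_def)
  have h1: "a k2 + b k2 * t1 \<le> a k1 + b k1 * t1" using a1 mx_ge[OF fin a2(1), of a b t1] by linarith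
  have h2: "a k1 + b k1 * t2 \<le> a k2 + b k2 * t2" using a2 mx_ge[OF fin a1(1), of a b t2] by linarith
  have "(b k1 - b k2) * (t2 - t1) \<le> 0" using h1 h2 by (simp add: algebra_simps)
  then show ?thesis using t by (simp add: mult_le_0_iff)
qed

lemma G2:
  assumes fin: "finite I" and ne: "I \<noteq> {}"
  shows "finite (changepoints (mx I a b)) \<and> card (changepoints (mx I a b)) \<le> card I - 1"
proof -
  define C where "C = changepoints (mx I a b)"
  define phi where "phi t = Max (b ` act I a b t)" for t
  have actfin: "finite (act I a b t)" for t using fin by (auto simp: act_def)
  have actne: "act I a b t \<noteq> {}" for t using mx_in[OF fin ne, of a b t] unfolding act_def by blast
  have two: "\<exists>k\<in>act I a b t. \<exists>l\<in>act I a b t. b k < b l" if "t \<in> C" for t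
  proof -
    from that G1[OF fin ne, of a b t] obtain k l where "k\<in>I" "l\<in>I" "a k + b k*t = mx I a b t"
       "a l + b l*t = mx I a b t" "b k \<noteq> b l" unfolding C_def by blast
    then show ?thesis unfolding act_def
      by (metis (mono_tags, lifting) linorder_neqE_linordered_idom mem_Collect_eq)
  qed
  have phi_ge: "b k \<le> phi t" if "k \<in> act I a b t" for k t
    unfolding phi_def using that actfin by (intro Max_ge) auto
  have phi_in: "\<exists>k\<in>act I a b t. phi t = b k" for t
  proof -
    have "phi t \<in> b ` act I a b t" unfolding phi_def using actfin actne by (intro Max_in) auto
    then show ?thesis by auto
  qed
  have lt: "phi t1 < phi t2" if tt: "t1 \<in> C" "t2 \<in> C" "t1 < t2" for t1 t2
  proof -
    obtain k1 where k1: "k1 \<in> act I a b t1" "phi t1 = b k1" using phi_in by blast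
    obtain k l where kl: "k\<in>act I a b t2" "l\<in>act I a b t2" "b k < b l" using two tt(2) by blast
    have "b k1 \<le> b k" using act_mono[OF fin tt(3) k1(1) kl(1)] .
    then show ?thesis using k1 kl phi_ge[OF kl(2)] by linarith
  qed
  have inj: "inj_on phi C"
  proof (rule inj_onI)
    fix x y assume "x \<in> C" "y \<in> C" "phi x = phi y"
    then show "x = y" using lt by (metis less_irrefl linorder_neqE_linordered_idom)
  qed
  have sub: "phi ` C \<subseteq> b ` I - {Min (b ` I)}"
  proof
    fix z assume "z \<in> phi ` C"
    then obtain t where t: "t \<in> C" "z = phi t" by auto
    obtain k l where kl: "k\<in>act I a b t" "l\<in>act I a b t" "b k < b l" using two t(1) by blast
    have "Min (b ` I) \<le> b k" using kl(1) fin by (intro Min_le) (auto simp: act_def)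
    moreover have "b l \<le> phi t" using phi_ge[OF kl(2)] .
    moreover obtain k2 where "k2 \<in> act I a b t" "phi t = b k2" using phi_in by blast
    ultimately show "z \<in> b ` I - {Min (b ` I)}" using t kl by (auto simp: act_def)
  qed
  have finB: "finite (b ` I - {Min (b ` I)})" using fin by auto
  have "card C \<le> card (b ` I - {Min (b ` I)})" using card_inj_on_le[OF inj sub finB] .
  also have "\<dots> = card (b ` I) - 1" using fin ne by (subst card_Diff_singleton) (auto intro!: Min_in)
  also have "\<dots> \<le> card I - 1" using card_image_le[OF fin, of b] by linarith
  finally show ?thesis using inj_on_finite[OF inj sub finB] C_def by auto
qed

lemma cp_sub:
  assumes "\<forall>s\<in>{0..1}. f s = g s"
  shows "changepoints g \<subseteq> changepoints f"
proof
  fix t assume t: "t \<in> changepoints g"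
  show "t \<in> changepoints f"
  proof (rule ccontr)
    assume "t \<notin> changepoints f"
    with t obtain e a b where e: "e > 0" "\<forall>s\<in>{t - e<..<t + e}. f s = a * s + b" and t01: "t \<in> {0<..<1}"
      unfolding changepoints_def by auto
    define e' where "e' = min e (min t (1 - t))"
    have "e' > 0" using e t01 e'_def by auto
    moreover have "\<forall>s\<in>{t - e'<..<t + e'}. g s = a * s + b"
    proof
      fix s assume s: "s \<in> {t - e'<..<t + e'}"
      then have "s \<in> {0..1}" "s \<in> {t - e<..<t + e}" using e'_def by auto
      then have "f s = g s" using assms by blast
      then show "g s = a * s + b" using e \<open>s \<in> {t - e<..<t + e}\<close> by auto
    qed
    ultimately show False using t unfolding changepoints_def by blast
  qed
qed

lemma cp_cong: "\<forall>s\<in>{0..1}. f s = g s \<Longrightarrow> changepoints f = changepoints g"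
  using cp_sub[of f g] cp_sub[of g f] by auto




lemma feas_finite: "finite (feas n p)"
proof -
  have "feas n p \<subseteq> (\<lambda>B i. if i \<in> B then 1 else 0) ` Pow {..<n}"
  proof
    fix y assume y: "y \<in> feas n p"
    have "y = (\<lambda>i. if i \<in> {i. i < n \<and> y i = 1} then 1 else 0)"
    proof
      fix i
      have "i < n \<Longrightarrow> y i = 0 \<or> y i = 1" "\<not> i < n \<Longrightarrow> y i = 0" using y unfolding feas_def by auto
      then show "y i = (if i \<in> {i. i < n \<and> y i = 1} then 1 else 0)"
        by (cases "i < n") auto
    qed
    then show "y \<in> (\<lambda>B i. if i \<in> B then 1 else 0) ` Pow {..<n}" by blast
  qed
  then show ?thesis by (rule finite_subset) auto
qed

lemma pt01: "(x::real) \<in> {0,1} \<Longrightarrow> (y::real) \<in> {0,1} \<Longrightarrow> c * (x - y) = (if x = 1 \<and> y = 0 then c else 0) - (if x = 0 \<and> y = 1 then c else 0)"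
  by (elim insertE emptyE) simp_all

lemma sum_if_filter: "(\<Sum>i<(n::nat). if P i then (c i::real) else 0) = sum c {i. i<n \<and> P i}"
proof -
  have "sum c {i\<in>{..<n}. P i} = (\<Sum>i<n. if P i then c i else 0)" by (rule sum.inter_filter) simp
  moreover have "{i\<in>{..<n}. P i} = {i. i<n \<and> P i}" by auto
  ultimately show ?thesis by simp
qed

lemma decomp:
  fixes x y c :: "nat \<Rightarrow> real"
  assumes "\<forall>i<n. x i \<in> {0,1}" "\<forall>i<n. y i \<in> {0,1}"
  shows "(\<Sum>i<n. c i * (x i - y i)) = sum c {i. i<n \<and> x i = 1 \<and> y i = 0} - sum c {i. i<n \<and> x i = 0 \<and> y i = 1}"
proof -
  have "(\<Sum>i<n. c i * (x i - y i)) = (\<Sum>i<n. (if x i = 1 \<and> y i = 0 then c i else 0) - (if x i = 0 \<and> y i = 1 then c i else 0))"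
  proof (rule sum.cong)
    fix i assume "i \<in> {..<n}"
    then have "x i \<in> {0,1}" "y i \<in> {0,1}" using assms by auto
    then show "c i * (x i - y i) = (if x i = 1 \<and> y i = 0 then c i else 0) - (if x i = 0 \<and> y i = 1 then c i else 0)"
      by (rule pt01)
  qed simp
  also have "\<dots> = (\<Sum>i<n. if x i = 1 \<and> y i = 0 then c i else 0) - (\<Sum>i<n. if x i = 0 \<and> y i = 1 then c i else 0)"
    by (simp add: sum_subtractf)
  also have "\<dots> = sum c {i. i<n \<and> x i = 1 \<and> y i = 0} - sum c {i. i<n \<and> x i = 0 \<and> y i = 1}"
    by (simp only: sum_if_filter)
  finally show ?thesis .
qed

lemma ip_diff: "ip n c x - ip n c y = (\<Sum>i<n. c i * (x i - y i))"
  unfolding ip_def by (simp add: sum_subtractf right_diff_distrib)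

definition SS :: "nat \<Rightarrow> (nat \<Rightarrow> real) \<Rightarrow> nat set" where "SS n x = {i. i<n \<and> x i = (1::real)}"
definition TT :: "nat \<Rightarrow> (nat \<Rightarrow> real) \<Rightarrow> nat set" where "TT n x = {i. i<n \<and> x i = (0::real)}"
definition DA :: "nat \<Rightarrow> (nat \<Rightarrow> real) \<Rightarrow> (nat set \<times> nat set) set" where "DA n x = {(D,A). D \<subseteq> SS n x \<and> A \<subseteq> TT n x \<and> card D = card A}"
definition aDA :: "(nat \<Rightarrow> real) \<Rightarrow> nat set \<times> nat set \<Rightarrow> real" where "aDA ch = (\<lambda>(D,A). sum ch D - sum ch A)"
definition bDA :: "(nat \<Rightarrow> real) \<Rightarrow> nat set \<times> nat set \<Rightarrow> real" where "bDA ch = (\<lambda>(D,A). sum ch D + sum ch A)"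

lemma DA_finite: "finite (DA n x)"
proof -
  have "DA n x \<subseteq> Pow {..<n} \<times> Pow {..<n}" unfolding DA_def SS_def TT_def by auto
  then show ?thesis by (rule finite_subset) (rule finite_cartesian_product; simp)
qed

lemma DA_ne: "({},{}) \<in> DA n x" unfolding DA_def by auto

lemma lineDA: "aDA ch P + bDA ch P * t = (1+t) * sum ch (fst P) - (1-t) * sum ch (snd P)"
  by (cases P) (simp add: aDA_def bDA_def algebra_simps)

lemma reg_DA:
  assumes x: "x \<in> feas n p" and ch: "\<forall>i<n. 0 \<le> ch i" and t: "t \<in> {0..1}"
  shows "reg n p ch x t = mx (DA n x) (aDA ch) (bDA ch) t"
proof -
  define R where "R = mx (DA n x) (aDA ch) (bDA ch) t"
  have x01: "\<forall>i<n. x i \<in> {0,1}" and x0: "\<forall>i\<ge>n. x i = 0" and xs: "(\<Sum>i<n. x i) = real p"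
    using x unfolding feas_def by auto
  have claim1: "ip n c x - ip n c y \<le> R" if c: "c \<in> unc n ch t" and y: "y \<in> feas n p" for c y
  proof -
    have y01: "\<forall>i<n. y i \<in> {0,1}" and ys: "(\<Sum>i<n. y i) = real p" using y unfolding feas_def by auto
    define D where "D = {i. i<n \<and> x i = 1 \<and> y i = 0}"
    define A where "A = {i. i<n \<and> x i = 0 \<and> y i = 1}"
    have "(\<Sum>i<n. 1 * (x i - y i)) = sum (\<lambda>_. 1) D - sum (\<lambda>_. 1) A"
      using decomp[OF x01 y01, of "\<lambda>_. 1"] D_def A_def by simp
    moreover have "(\<Sum>i<n. 1 * (x i - y i)) = 0" using xs ys by (simp add: sum_subtractf)
    ultimately have "real (card D) = real (card A)" by simp
    then have "(D,A) \<in> DA n x" unfolding DA_def SS_def TT_def D_def A_def by auto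
    then have "aDA ch (D,A) + bDA ch (D,A) * t \<le> R" unfolding R_def by (rule mx_ge[OF DA_finite])
    then have le: "(1+t) * sum ch D - (1-t) * sum ch A \<le> R" by (simp add: lineDA)
    have "ip n c x - ip n c y = sum c D - sum c A"
      using ip_diff decomp[OF x01 y01, of c] D_def A_def by simp
    also have "\<dots> \<le> (1+t) * sum ch D - (1-t) * sum ch A"
    proof -
      have "sum c D \<le> sum (\<lambda>i. (1+t) * ch i) D" using c unfolding unc_def D_def by (intro sum_mono) auto
      moreover have "sum (\<lambda>i. (1-t) * ch i) A \<le> sum c A" using c unfolding unc_def A_def by (intro sum_mono) auto
      ultimately show ?thesis by (simp add: sum_distrib_left)
    qed
    finally show ?thesis using le by linarith
  qed
  obtain P where P: "P \<in> DA n x" "aDA ch P + bDA ch P * t = R"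
    using mx_in[OF DA_finite, of n x "aDA ch" "bDA ch" t] DA_ne R_def by blast
  obtain D A where DA: "P = (D,A)" by (cases P)
  have DS: "D \<subseteq> SS n x" and AT: "A \<subseteq> TT n x" and cDA: "card D = card A" using P DA unfolding DA_def by auto
  have RDA: "R = (1+t) * sum ch D - (1-t) * sum ch A" using P(2) DA lineDA[of ch P t] by simp
  define y where "y i = (if i \<in> D then 0 else if i \<in> A then 1 else x i)" for i
  have y01: "\<forall>i<n. y i \<in> {0,1}" using x01 y_def by auto
  have Deq: "{i. i<n \<and> x i = 1 \<and> y i = 0} = D" using DS AT x01 unfolding y_def SS_def TT_def by (auto simp: subset_iff)
  have Aeq: "{i. i<n \<and> x i = 0 \<and> y i = 1} = A" using DS AT x01 unfolding y_def SS_def TT_def by (auto simp: subset_iff)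
  have yfeas: "y \<in> feas n p"
  proof -
    have "(\<Sum>i<n. 1 * (x i - y i)) = real (card D) - real (card A)"
      using decomp[OF x01 y01, of "\<lambda>_. 1"] Deq Aeq by simp
    then have "(\<Sum>i<n. x i) - (\<Sum>i<n. y i) = 0" using cDA by (simp add: sum_subtractf)
    moreover have "\<forall>i\<ge>n. y i = 0" using x0 DS AT unfolding y_def SS_def TT_def by (auto simp: subset_iff)
    ultimately show ?thesis using y01 xs unfolding feas_def by auto
  qed
  define c0 where "c0 i = (if i < n then (if x i = 1 then (1+t) * ch i else (1-t) * ch i) else 0)" for i
  have c0: "c0 \<in> unc n ch t"
  proof -
    have "(1-t) * ch i \<le> (1+t) * ch i" if "i<n" for i
      using ch that t by (intro mult_right_mono) auto
    then show ?thesis unfolding unc_def c0_def by auto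
  qed
  have "ip n c0 x - ip n c0 y = sum c0 D - sum c0 A"
    using ip_diff decomp[OF x01 y01, of c0] Deq Aeq by simp
  also have "\<dots> = R"
  proof -
    have "sum c0 D = sum (\<lambda>i. (1+t) * ch i) D" using DS unfolding SS_def c0_def by (intro sum.cong) auto
    moreover have "sum c0 A = sum (\<lambda>i. (1-t) * ch i) A" using AT unfolding TT_def c0_def by (intro sum.cong) auto
    ultimately show ?thesis using RDA by (simp add: sum_distrib_left)
  qed
  finally have c0y: "ip n c0 x - ip n c0 y = R" .
  have val_le: "ip n c x - Min ((\<lambda>y. ip n c y) ` feas n p) \<le> R" if c: "c \<in> unc n ch t" for c
  proof -
    have "Min ((\<lambda>y. ip n c y) ` feas n p) \<in> (\<lambda>y. ip n c y) ` feas n p"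
      using feas_finite x by (intro Min_in) auto
    then obtain y' where "y' \<in> feas n p" "Min ((\<lambda>y. ip n c y) ` feas n p) = ip n c y'" by auto
    then show ?thesis using claim1[OF c] by auto
  qed
  have "Min ((\<lambda>y. ip n c0 y) ` feas n p) \<le> ip n c0 y" using feas_finite yfeas by (intro Min_le) auto
  then have "ip n c0 x - Min ((\<lambda>y. ip n c0 y) ` feas n p) = R" using val_le[OF c0] c0y by linarith
  then have "reg n p ch x t = R" unfolding reg_def
    using c0 val_le by (intro cSup_eq_maximum) (auto intro!: image_eqI[of _ _ c0])
  then show ?thesis using R_def by simp
qed




lemma key:
  fixes a b c d :: real and n1 n2 m1 m2 :: nat
  assumes "a\<ge>0" "b\<ge>0" "c\<ge>0" "d\<ge>0" "a - b = c - d" "n1 + m2 = n2 + m1"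
    "n1 = 0 \<Longrightarrow> a = 0" "n2 = 0 \<Longrightarrow> b = 0" "m1 = 0 \<Longrightarrow> c = 0" "m2 = 0 \<Longrightarrow> d = 0"
    "n1>0 \<Longrightarrow> m1>0 \<Longrightarrow> a=0 \<and> c=0" "n2>0 \<Longrightarrow> m2>0 \<Longrightarrow> b=0 \<and> d=0"
  shows "a=b \<and> c=d"
  using assms by (cases "n1=0"; cases "n2=0"; cases "m1=0"; cases "m2=0") auto

lemma DA_sub: "P \<in> DA n x \<Longrightarrow> fst P \<subseteq> SS n x \<and> snd P \<subseteq> TT n x \<and> card (fst P) = card (snd P)"
  unfolding DA_def by auto

lemma SS_fin: "finite (SS n x)" unfolding SS_def by auto
lemma TT_fin: "finite (TT n x)" unfolding TT_def by auto
lemma SS_TT: "i \<in> SS n x \<Longrightarrow> i \<notin> TT n x" unfolding SS_def TT_def by auto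

lemma opt_a:
  assumes P: "(D,A) \<in> DA n x" and act: "aDA ch (D,A) + bDA ch (D,A) * t = mx (DA n x) (aDA ch) (bDA ch) t"
    and i: "i \<in> D" and j: "j \<in> A"
  shows "(1-t) * ch j \<le> (1+t) * ch i"
proof -
  have DS: "D \<subseteq> SS n x" "A \<subseteq> TT n x" "card D = card A" using DA_sub[OF P] by auto
  have fD: "finite D" "finite A" using DS SS_fin TT_fin finite_subset by metis+
  have "(D - {i}, A - {j}) \<in> DA n x" unfolding DA_def using DS fD i j by auto
  from mx_ge[OF DA_finite this, of "aDA ch" "bDA ch" t] act
  have "(1+t) * sum ch (D - {i}) - (1-t) * sum ch (A - {j}) \<le> (1+t) * sum ch D - (1-t) * sum ch A"
    by (simp add: lineDA)
  moreover have "sum ch (D - {i}) = sum ch D - ch i" using fD i by (simp add: sum_diff1)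
  moreover have "sum ch (A - {j}) = sum ch A - ch j" using fD j by (simp add: sum_diff1)
  ultimately show ?thesis by (simp add: algebra_simps)
qed

lemma opt_b:
  assumes P: "(D,A) \<in> DA n x" and act: "aDA ch (D,A) + bDA ch (D,A) * t = mx (DA n x) (aDA ch) (bDA ch) t"
    and i: "i \<in> SS n x - D" and j: "j \<in> TT n x - A"
  shows "(1+t) * ch i \<le> (1-t) * ch j"
proof -
  have DS: "D \<subseteq> SS n x" "A \<subseteq> TT n x" "card D = card A" using DA_sub[OF P] by auto
  have fD: "finite D" "finite A" using DS SS_fin TT_fin finite_subset by metis+
  have "(insert i D, insert j A) \<in> DA n x" unfolding DA_def using DS fD i j by auto
  from mx_ge[OF DA_finite this, of "aDA ch" "bDA ch" t] act
  have "(1+t) * sum ch (insert i D) - (1-t) * sum ch (insert j A) \<le> (1+t) * sum ch D - (1-t) * sum ch A"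
    by (simp add: lineDA)
  moreover have "sum ch (insert i D) = sum ch D + ch i" using fD i by simp
  moreover have "sum ch (insert j A) = sum ch A + ch j" using fD j by simp
  ultimately show ?thesis by (simp add: algebra_simps)
qed

lemma zero_sums:
  assumes "\<And>i j. i \<in> X \<Longrightarrow> j \<in> Y \<Longrightarrow> ch i = 0 \<and> ch j = (0::real)" "X \<noteq> {}" "Y \<noteq> {}"
  shows "sum ch X = 0 \<and> sum ch Y = 0"
  using assms by (metis equals0I sum.neutral)

lemma exch:
  assumes ch: "\<forall>i<n. 0 \<le> ch i" and t: "0 < t" "t < 1"
    and P: "(D,A) \<in> DA n x" and Q: "(D',A') \<in> DA n x"
    and actP: "aDA ch (D,A) + bDA ch (D,A) * t = mx (DA n x) (aDA ch) (bDA ch) t"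
    and actQ: "aDA ch (D',A') + bDA ch (D',A') * t = mx (DA n x) (aDA ch) (bDA ch) t"
    and gen: "\<forall>i\<in>SS n x. \<forall>j\<in>TT n x. (1+t) * ch i = (1-t) * ch j \<longrightarrow> ch i + ch j = 0"
  shows "bDA ch (D,A) = bDA ch (D',A')"
proof -
  have DS: "D \<subseteq> SS n x" "A \<subseteq> TT n x" "card D = card A" using DA_sub[OF P] by auto
  have DS': "D' \<subseteq> SS n x" "A' \<subseteq> TT n x" "card D' = card A'" using DA_sub[OF Q] by auto
  have fD: "finite D" "finite A" "finite D'" "finite A'" using DS DS' SS_fin TT_fin finite_subset by metis+
  have chS: "0 \<le> ch i" if "i \<in> SS n x" for i using ch that unfolding SS_def by auto
  have chT: "0 \<le> ch i" if "i \<in> TT n x" for i using ch that unfolding TT_def by auto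
  have tie: "ch i = 0 \<and> ch j = 0" if R: "(E,B) \<in> DA n x" "(E',B') \<in> DA n x"
    "aDA ch (E,B) + bDA ch (E,B) * t = mx (DA n x) (aDA ch) (bDA ch) t"
    "aDA ch (E',B') + bDA ch (E',B') * t = mx (DA n x) (aDA ch) (bDA ch) t"
    and ij: "i \<in> E' - E" "j \<in> B' - B" for E B E' B' i j
  proof -
    have s: "E' \<subseteq> SS n x" "B' \<subseteq> TT n x" using DA_sub[OF R(2)] by auto
    have iS: "i \<in> SS n x" and jT: "j \<in> TT n x" using s ij by auto
    have "(1+t) * ch i \<le> (1-t) * ch j" using opt_b[OF R(1) R(3)] iS jT ij by auto
    moreover have "(1-t) * ch j \<le> (1+t) * ch i" using opt_a[OF R(2) R(4)] ij by auto
    ultimately have "ch i + ch j = 0" using gen iS jT by auto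
    then show ?thesis using chS[OF iS] chT[OF jT] by auto
  qed
  define a where "a = (1+t) * sum ch (D' - D)"
  define b where "b = (1+t) * sum ch (D - D')"
  define c where "c = (1-t) * sum ch (A' - A)"
  define d where "d = (1-t) * sum ch (A - A')"
  have nn: "0 \<le> sum ch (D' - D)" "0 \<le> sum ch (D - D')" "0 \<le> sum ch (A' - A)" "0 \<le> sum ch (A - A')"
    using DS DS' chS chT by (auto intro!: sum_nonneg)
  have sD: "sum ch D = sum ch (D \<inter> D') + sum ch (D - D')" using sum.Int_Diff[OF fD(1)] .
  have sD': "sum ch D' = sum ch (D \<inter> D') + sum ch (D' - D)" using sum.Int_Diff[OF fD(3), of ch D] by (simp add: Int_commute)
  have sA: "sum ch A = sum ch (A \<inter> A') + sum ch (A - A')" using sum.Int_Diff[OF fD(2)] .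
  have sA': "sum ch A' = sum ch (A \<inter> A') + sum ch (A' - A)" using sum.Int_Diff[OF fD(4), of ch A] by (simp add: Int_commute)
  have cD: "card D = card (D \<inter> D') + card (D - D')" using card_Int_Diff[OF fD(1)] .
  have cD': "card D' = card (D \<inter> D') + card (D' - D)" using card_Int_Diff[OF fD(3), of D] by (simp add: Int_commute)
  have cA: "card A = card (A \<inter> A') + card (A - A')" using card_Int_Diff[OF fD(2)] .
  have cA': "card A' = card (A \<inter> A') + card (A' - A)" using card_Int_Diff[OF fD(4), of A] by (simp add: Int_commute)
  have eqv: "(1+t) * sum ch D - (1-t) * sum ch A = (1+t) * sum ch D' - (1-t) * sum ch A'"
    using actP actQ by (simp add: lineDA)
  have fin2: "finite (D' - D)" "finite (D - D')" "finite (A' - A)" "finite (A - A')" using fD by auto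
  have h1: "0 \<le> a" "0 \<le> b" "0 \<le> c" "0 \<le> d" using nn t unfolding a_def b_def c_def d_def by auto
  have h2: "a - b = c - d" using eqv sD sD' sA sA' unfolding a_def b_def c_def d_def by (simp add: algebra_simps)
  have h3: "card (D' - D) + card (A - A') = card (D - D') + card (A' - A)" using cD cD' cA cA' DS(3) DS'(3) by linarith
  have h4: "card (D' - D) = 0 \<Longrightarrow> a = 0" using fin2 unfolding a_def by (metis card_0_eq sum.empty mult_zero_right)
  have h5: "card (D - D') = 0 \<Longrightarrow> b = 0" using fin2 unfolding b_def by (metis card_0_eq sum.empty mult_zero_right)
  have h6: "card (A' - A) = 0 \<Longrightarrow> c = 0" using fin2 unfolding c_def by (metis card_0_eq sum.empty mult_zero_right)
  have h7: "card (A - A') = 0 \<Longrightarrow> d = 0" using fin2 unfolding d_def by (metis card_0_eq sum.empty mult_zero_right)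
  have h8: "a = 0 \<and> c = 0" if "0 < card (D' - D)" "0 < card (A' - A)"
  proof -
    from that have "D' - D \<noteq> {}" "A' - A \<noteq> {}" by (metis card.empty less_irrefl)+
    from zero_sums[OF tie[OF P Q actP actQ] this] show "a = 0 \<and> c = 0" unfolding a_def c_def by simp
  qed
  have h9: "b = 0 \<and> d = 0" if "0 < card (D - D')" "0 < card (A - A')"
  proof -
    from that have "D - D' \<noteq> {}" "A - A' \<noteq> {}" by (metis card.empty less_irrefl)+
    from zero_sums[OF tie[OF Q P actQ actP] this] show "b = 0 \<and> d = 0" unfolding b_def d_def by simp
  qed
  have k: "a = b \<and> c = d" using key[OF h1 h2 h3 h4 h5 h6 h7 h8 h9] .
  then have "sum ch (D' - D) = sum ch (D - D')" "sum ch (A' - A) = sum ch (A - A')"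
    using t unfolding a_def b_def c_def d_def by auto
  then show ?thesis using sD sD' sA sA' by (simp add: bDA_def)
qed




definition Top :: "(nat \<Rightarrow> real) \<Rightarrow> nat set \<Rightarrow> nat \<Rightarrow> real" where
  "Top ch S k = Max (sum ch ` {D. D \<subseteq> S \<and> card D = k})"
definition Bot :: "(nat \<Rightarrow> real) \<Rightarrow> nat set \<Rightarrow> nat \<Rightarrow> real" where
  "Bot ch T k = Min (sum ch ` {D. D \<subseteq> T \<and> card D = k})"
definition aK where "aK ch S T k = Top ch S k - Bot ch T k"
definition bK where "bK ch S T k = Top ch S k + Bot ch T k"

lemma Max_dom:
  fixes f :: "'a \<Rightarrow> real" and g :: "'b \<Rightarrow> real"
  assumes "finite I" "I \<noteq> {}" "finite J" "J \<noteq> {}"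
    "\<forall>i\<in>I. \<exists>j\<in>J. f i \<le> g j" "\<forall>j\<in>J. \<exists>i\<in>I. g j \<le> f i"
  shows "Max (f ` I) = Max (g ` J)"
proof -
  have gen: "Max (f ` I) \<le> Max (g ` J)" if a: "finite I" "I \<noteq> {}" "finite J" "J \<noteq> {}"
    "\<forall>i\<in>I. \<exists>j\<in>J. f i \<le> g j" for f :: "'c \<Rightarrow> real" and g :: "'d \<Rightarrow> real" and I J
  proof (rule Max.boundedI)
    show "finite (f ` I)" "f ` I \<noteq> {}" using a by auto
    fix y assume "y \<in> f ` I"
    then obtain i where i: "i \<in> I" "y = f i" by auto
    then obtain j where j: "j \<in> J" "f i \<le> g j" using a by blast
    have "g j \<le> Max (g ` J)" using a j by (intro Max_ge) auto
    then show "y \<le> Max (g ` J)" using i j by linarith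
  qed
  show ?thesis using gen[of I J f g] gen[of J I g f] assms by linarith
qed

lemma subs_fin: "finite S \<Longrightarrow> finite {D. D \<subseteq> S \<and> card D = k}"
  by (rule finite_subset[of _ "Pow S"]) auto

lemma subs_ne: "finite S \<Longrightarrow> k \<le> card S \<Longrightarrow> {D. D \<subseteq> S \<and> card D = k} \<noteq> {}"
  by (metis (mono_tags, lifting) empty_iff mem_Collect_eq obtain_subset_with_card_n)

lemma DA_K:
  assumes t: "t \<in> {0..1}"
  shows "mx (DA n x) (aDA ch) (bDA ch) t
       = mx {0..min (card (SS n x)) (card (TT n x))} (aK ch (SS n x) (TT n x)) (bK ch (SS n x) (TT n x)) t"
proof -
  define S where "S = SS n x"
  define T where "T = TT n x"
  have fS: "finite S" "finite T" using S_def T_def SS_fin TT_fin by auto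
  have gk: "aK ch S T k + bK ch S T k * t = (1+t) * Top ch S k - (1-t) * Bot ch T k" for k
    unfolding aK_def bK_def by (simp add: algebra_simps)
  show ?thesis unfolding mx_def S_def[symmetric] T_def[symmetric]
  proof (rule Max_dom)
    show "finite (DA n x)" "DA n x \<noteq> {}" using DA_finite[of n x] DA_ne[of n x] by auto
    show "finite {0..min (card S) (card T)}" "{0..min (card S) (card T)} \<noteq> {}" by auto
    show "\<forall>P\<in>DA n x. \<exists>k\<in>{0..min (card S) (card T)}. aDA ch P + bDA ch P * t \<le> aK ch S T k + bK ch S T k * t"
    proof
      fix P assume P: "P \<in> DA n x"
      obtain D A where PDA: "P = (D,A)" by (cases P)
      have DS: "D \<subseteq> S" "A \<subseteq> T" "card D = card A" using DA_sub[OF P] PDA S_def T_def by auto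
      have "card D \<le> card S" "card A \<le> card T" using DS fS card_mono by metis+
      then have k: "card D \<in> {0..min (card S) (card T)}" using DS(3) by simp
      have "sum ch D \<le> Top ch S (card D)" unfolding Top_def using DS fS
        by (intro Max_ge) (auto intro: finite_imageI subs_fin)
      moreover have "Bot ch T (card D) \<le> sum ch A" unfolding Bot_def using DS fS
        by (intro Min_le) (auto intro: finite_imageI subs_fin)
      ultimately have "(1+t) * sum ch D - (1-t) * sum ch A \<le> (1+t) * Top ch S (card D) - (1-t) * Bot ch T (card D)"
      proof -
        have "(1+t) * sum ch D \<le> (1+t) * Top ch S (card D)" using t \<open>sum ch D \<le> _\<close> by (intro mult_left_mono) auto
        moreover have "(1-t) * Bot ch T (card D) \<le> (1-t) * sum ch A" using t \<open>Bot ch T (card D) \<le> _\<close> by (intro mult_left_mono) auto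
        ultimately show ?thesis by linarith
      qed
      then show "\<exists>k\<in>{0..min (card S) (card T)}. aDA ch P + bDA ch P * t \<le> aK ch S T k + bK ch S T k * t"
        using k PDA gk lineDA[of ch P t] by (intro bexI[of _ "card D"]) auto
    qed
    show "\<forall>k\<in>{0..min (card S) (card T)}. \<exists>P\<in>DA n x. aK ch S T k + bK ch S T k * t \<le> aDA ch P + bDA ch P * t"
    proof
      fix k assume k: "k \<in> {0..min (card S) (card T)}"
      have "Top ch S k \<in> sum ch ` {D. D \<subseteq> S \<and> card D = k}" unfolding Top_def
        using subs_fin[OF fS(1)] subs_ne[OF fS(1)] k by (intro Max_in) auto
      then obtain D where D: "D \<subseteq> S" "card D = k" "sum ch D = Top ch S k" by auto
      have "Bot ch T k \<in> sum ch ` {D. D \<subseteq> T \<and> card D = k}" unfolding Bot_def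
        using subs_fin[OF fS(2)] subs_ne[OF fS(2)] k by (intro Min_in) auto
      then obtain A where A: "A \<subseteq> T" "card A = k" "sum ch A = Bot ch T k" by auto
      have P: "(D,A) \<in> DA n x" unfolding DA_def using D A S_def T_def by auto
      show "\<exists>P\<in>DA n x. aK ch S T k + bK ch S T k * t \<le> aDA ch P + bDA ch P * t"
        using P D A gk lineDA[of ch "(D,A)" t] by (intro bexI[of _ "(D,A)"]) auto
    qed
  qed
qed

lemma card_SS:
  assumes x: "x \<in> feas n p" shows "card (SS n x) = p" "card (TT n x) = n - p"
proof -
  have x01: "\<forall>i<n. x i \<in> {0,1}" and xs: "(\<Sum>i<n. x i) = real p" using x unfolding feas_def by auto
  have "(\<Sum>i<n. x i) = (\<Sum>i<n. if x i = 1 then (\<lambda>_. 1::real) i else 0)"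
    using x01 by (intro sum.cong) auto
  also have "\<dots> = sum (\<lambda>_. 1::real) (SS n x)" unfolding SS_def by (rule sum_if_filter)
  finally have "real (card (SS n x)) = real p" using xs by simp
  then show c: "card (SS n x) = p" by simp
  have "SS n x \<union> TT n x = {..<n}" using x01 unfolding SS_def TT_def by auto
  moreover have "SS n x \<inter> TT n x = {}" unfolding SS_def TT_def by auto
  ultimately have "card (SS n x) + card (TT n x) = n"
    by (metis card_Un_disjoint card_lessThan SS_fin TT_fin)
  then show "card (TT n x) = n - p" using c by simp
qed




lemma count_bound:
  assumes x: "x \<in> feas n p" and ch: "\<forall>i<n. 0 \<le> ch i"
  shows "finite (changepoints (reg n p ch x)) \<and> card (changepoints (reg n p ch x)) \<le> min p (n - p)"
proof -
  define K where "K = {0..min (card (SS n x)) (card (TT n x))}"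
  have e: "changepoints (reg n p ch x) = changepoints (mx K (aK ch (SS n x) (TT n x)) (bK ch (SS n x) (TT n x)))"
    unfolding K_def using reg_DA[OF x ch] DA_K by (intro cp_cong) auto
  have K: "K \<noteq> {}" "finite K" unfolding K_def by auto
  have c: "card K - 1 = min p (n - p)" unfolding K_def using card_SS[OF x] by simp
  show ?thesis using G2[OF K(2) K(1), of "aK ch (SS n x) (TT n x)" "bK ch (SS n x) (TT n x)"] unfolding e c .
qed

lemma cover:
  assumes x: "x \<in> feas n p" and ch: "\<forall>i<n. 0 \<le> ch i"
  shows "changepoints (reg n p ch x) \<subseteq> {t\<in>{0..1}. \<exists>i<n. \<exists>j<n. ch i + ch j > 0 \<and> (1+t) * ch i = (1-t) * ch j}"
proof
  fix t assume tc: "t \<in> changepoints (reg n p ch x)"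
  have eq: "changepoints (reg n p ch x) = changepoints (mx (DA n x) (aDA ch) (bDA ch))"
    using reg_DA[OF x ch] by (intro cp_cong) auto
  have t01: "0 < t" "t < 1" using tc unfolding changepoints_def by auto
  have "t \<in> changepoints (mx (DA n x) (aDA ch) (bDA ch))" using tc eq by simp
  then obtain P Q where PQ: "P \<in> DA n x" "Q \<in> DA n x"
    "aDA ch P + bDA ch P * t = mx (DA n x) (aDA ch) (bDA ch) t"
    "aDA ch Q + bDA ch Q * t = mx (DA n x) (aDA ch) (bDA ch) t" "bDA ch P \<noteq> bDA ch Q"
    using G1[OF DA_finite DA_ne[THEN ex_in_conv[THEN iffD1, OF exI], of n x], of "aDA ch" "bDA ch" t] by blast
  obtain D A where P: "P = (D,A)" by (cases P)
  obtain D' A' where Q: "Q = (D',A')" by (cases Q)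
  have "\<not> (\<forall>i\<in>SS n x. \<forall>j\<in>TT n x. (1+t) * ch i = (1-t) * ch j \<longrightarrow> ch i + ch j = 0)"
  proof
    assume "\<forall>i\<in>SS n x. \<forall>j\<in>TT n x. (1+t) * ch i = (1-t) * ch j \<longrightarrow> ch i + ch j = 0"
    from exch[OF ch t01 PQ(1)[unfolded P] PQ(2)[unfolded Q] PQ(3)[unfolded P] PQ(4)[unfolded Q] this]
    show False using PQ(5) P Q by simp
  qed
  then obtain i j where ij: "i \<in> SS n x" "j \<in> TT n x" "(1+t) * ch i = (1-t) * ch j" "ch i + ch j \<noteq> 0" by blast
  have "i < n" "j < n" using ij unfolding SS_def TT_def by auto
  moreover then have "ch i + ch j > 0" using ch ij(4) by (metis add_nonneg_nonneg order_le_less)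
  ultimately show "t \<in> {t\<in>{0..1}. \<exists>i<n. \<exists>j<n. ch i + ch j > 0 \<and> (1+t) * ch i = (1-t) * ch j}"
    using t01 ij(3) by auto
qed

lemma L_card:
  fixes ch :: "nat \<Rightarrow> real" and n :: nat
  defines "L \<equiv> {t\<in>{0..1}. \<exists>i<n. \<exists>j<n. ch i + ch j > 0 \<and> (1+t) * ch i = (1-t) * ch j}"
  shows "finite L \<and> card L \<le> n * n"
proof -
  have sub: "L \<subseteq> (\<lambda>(i,j). (ch j - ch i) / (ch i + ch j)) ` ({..<n} \<times> {..<n})"
  proof
    fix t assume "t \<in> L"
    then obtain i j where ij: "i<n" "j<n" "ch i + ch j > 0" "(1+t) * ch i = (1-t) * ch j" unfolding L_def by auto
    have "t * (ch i + ch j) = ch j - ch i" using ij(4) by (simp add: algebra_simps)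
    then have "t = (ch j - ch i) / (ch i + ch j)" using ij(3) by (simp add: eq_divide_eq)
    moreover have "(i,j) \<in> {..<n} \<times> {..<n}" using ij by simp
    ultimately show "t \<in> (\<lambda>(i,j). (ch j - ch i) / (ch i + ch j)) ` ({..<n} \<times> {..<n})"
      by (intro image_eqI[of _ _ "(i,j)"]) simp_all
  qed
  have "finite ((\<lambda>(i,j). (ch j - ch i) / (ch i + ch j)) ` ({..<n} \<times> {..<n}))" by auto
  moreover have "card ((\<lambda>(i,j). (ch j - ch i) / (ch i + ch j)) ` ({..<n} \<times> {..<n})) \<le> n * n"
    using card_image_le[of "{..<n} \<times> {..<n}" "\<lambda>(i,j). (ch j - ch i) / (ch i + ch j)"] by (simp add: card_cartesian_product)
  ultimately show ?thesis using sub finite_subset[OF sub] card_mono[OF _ sub] by fastforce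
qed

theorem theorem4:
  shows "\<exists>C D :: real.
     \<forall>(n::nat) (p::nat) (ch :: nat \<Rightarrow> real).
       n \<ge> 1 \<longrightarrow> p \<le> n \<longrightarrow> (\<forall>i<n. ch i \<ge> 0) \<longrightarrow>
         (\<forall>x \<in> feas n p. finite (changepoints (reg n p ch x)) \<and>
             real (card (changepoints (reg n p ch x))) \<le> C * real (min p (n - p)))
       \<and> (\<exists>L. L \<subseteq> {0..1} \<and> finite L \<and> real (card L) \<le> D * real n ^ 2 \<and>
             (\<forall>x \<in> feas n p. changepoints (reg n p ch x) \<subseteq> L))"
proof (intro exI[of _ 1] allI impI conjI ballI)
  fix n p :: nat and ch :: "nat \<Rightarrow> real" and x
  assume ch: "\<forall>i<n. ch i \<ge> 0" and x: "x \<in> feas n p"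
  show "finite (changepoints (reg n p ch x))" using count_bound[OF x ch] by blast
  have "card (changepoints (reg n p ch x)) \<le> min p (n - p)" using count_bound[OF x ch] by blast
  then show "real (card (changepoints (reg n p ch x))) \<le> 1 * real (min p (n - p))" by simp
next
  fix n p :: nat and ch :: "nat \<Rightarrow> real"
  assume ch: "\<forall>i<n. ch i \<ge> 0"
  define L where "L = {t\<in>{0..1}. \<exists>i<n. \<exists>j<n. ch i + ch j > 0 \<and> (1+t) * ch i = (1-t) * ch j}"
  have "finite L \<and> card L \<le> n * n" unfolding L_def by (rule L_card)
  moreover have "L \<subseteq> {0..1}" unfolding L_def by blast
  moreover have "\<forall>x \<in> feas n p. changepoints (reg n p ch x) \<subseteq> L" using cover[OF _ ch] unfolding L_def by blast
  moreover have "real (card L) \<le> 1 * real n ^ 2" if "card L \<le> n * n"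
  proof -
    have "real (card L) \<le> real (n * n)" using that by (rule of_nat_mono)
    then show ?thesis by (simp add: power2_eq_square)
  qed
  ultimately have "L \<subseteq> {0..1} \<and> finite L \<and> real (card L) \<le> 1 * real n ^ 2 \<and>
             (\<forall>x \<in> feas n p. changepoints (reg n p ch x) \<subseteq> L)" by blast
  then show "\<exists>L. L \<subseteq> {0..1} \<and> finite L \<and> real (card L) \<le> 1 * real n ^ 2 \<and>
             (\<forall>x \<in> feas n p. changepoints (reg n p ch x) \<subseteq> L)" by blast
qed


end
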